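(* For $|q|<1$, $$1+\sum_{n=1}^\infty\frac{q^{(2n-1)^2}(-q;q^2)_{2n-1}\left(-1+q^{4n-1}+q^{8n}+q^{8n-2}\right)}{(q^4;q^4)_{2n}}=\frac{(q;q)_\infty}{(q^4;q^4)_\infty}.$$
   Context: $(a;q)_n=\prod_{k=0}^{n-1}(1-aq^k)$, $(a;q)_\infty=\prod_{k\ge0}(1-aq^k)$. *)

theory Defs
  imports "HOL-Analysis.Analysis"
begin

definition qpoch :: "complex \<Rightarrow> complex \<Rightarrow> nat \<Rightarrow> complex" where
  "qpoch a q n = (\<Prod>k<n. 1 - a * q ^ k)"

definition qpochinf :: "complex \<Rightarrow> complex \<Rightarrow> complex" where
  "qpochinf a q = (\<Prod>k. 1 - a * q ^ k)"

end

theory Submission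
  imports Defs
begin

lemma nz_pow:
  fixes q :: complex
  assumes "norm q < 1"
  shows "1 + q^(Suc k) \<noteq> 0" "1 - q^(Suc k) \<noteq> 0"
proof -
  have "norm (q^Suc k) < 1"
    by (metis assms norm_ge_zero norm_power power_Suc_less_one power_eq_0_iff
        zero_less_one linorder_not_le order_le_less norm_zero zero_less_Suc)
  then show "1 + q^(Suc k) \<noteq> 0" "1 - q^(Suc k) \<noteq> 0"
    by (metis add.inverse_unique norm_minus_cancel norm_one order_less_irrefl,
        metis eq_iff_diff_eq_0 norm_one order_less_irrefl)
qed

lemma norm_one_minus_ge:
  fixes x :: complex
  shows "1 - norm x \<le> norm (1 - x)" "1 - norm x \<le> norm (1 + x)"
  using norm_triangle_ineq2[of 1 x] norm_triangle_ineq2[of 1 "-x"] by auto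

lemma nz_pow':
  fixes q :: complex
  assumes "norm q < 1" "0 < k"
  shows "1 + q^k \<noteq> 0" "1 - q^k \<noteq> 0"
  using nz_pow[OF assms(1), of "k - 1"] assms(2) by simp_all

lemma aux_cancel:
  fixes a b d1 d2 d3 :: complex
  assumes "d2 \<noteq> 0"
  shows "a/d1 * (b/(d3*d2)) * d2 = (a*b)/(d1*d3)"
  using assms by (simp add: field_simps)

definition R :: "complex \<Rightarrow> nat \<Rightarrow> nat \<Rightarrow> complex" where
  "R q M n = (1 + q^(2*n+1)) * (- (q^(2*n))) * q^(2*M+1)
      / ((1 - q^(2*n+2)) * (1 + q^(2*M+2+2*n)))"

fun tt :: "complex \<Rightarrow> nat \<Rightarrow> nat \<Rightarrow> complex" where
  "tt q M 0 = 1" | "tt q M (Suc n) = tt q M n * R q M n"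

fun beta :: "real \<Rightarrow> real \<Rightarrow> nat \<Rightarrow> real" where
  "beta c r 0 = 1" | "beta c r (Suc n) = beta c r n * (c * r^(2*n))"

lemma normR:
  fixes q :: complex
  assumes q: "norm q < 1"
  shows "norm (R q M n) \<le> (2 / (1 - norm q ^ 2)^2 * norm q) * norm q ^ (2*n) * norm q ^ (2*M)"
proof -
  define r where "r = norm q"
  have r0: "0 \<le> r" and r1: "r < 1" using q by (auto simp: r_def)
  have d0: "0 < 1 - r^2" using r0 r1 by (simp add: power_less_one_iff)
  have a1: "norm (1 + q^(2*n+1)) \<le> 2"
  proof -
    have "norm (1 + q^(2*n+1)) \<le> 1 + r^(2*n+1)"
      using norm_triangle_ineq[of 1 "q^(2*n+1)"] by (simp add: r_def norm_power norm_mult)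
    also have "r^(2*n+1) \<le> 1" using r0 r1 by (intro power_le_one) auto
    finally show ?thesis by simp
  qed
  have le2: "r^(2*k+2) \<le> r^2" for k
    using r0 r1 by (intro power_decreasing) auto
  have b1: "1 - r^2 \<le> norm (1 - q^(2*n+2))"
    using norm_one_minus_ge(1)[of "q^(2*n+2)"] le2[of n] by (simp add: r_def norm_power norm_mult)
  have b2: "1 - r^2 \<le> norm (1 + q^(2*M+2+2*n))"
    using norm_one_minus_ge(2)[of "q^(2*M+2+2*n)"] le2[of "M+n"]
    by (simp add: r_def norm_power norm_mult algebra_simps)
  have den: "(1 - r^2)^2 \<le> norm ((1 - q^(2*n+2)) * (1 + q^(2*M+2+2*n)))"
  proof -
    have "(1 - r^2) * (1 - r^2) \<le> norm (1 - q^(2*n+2)) * norm (1 + q^(2*M+2+2*n))"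
      by (rule mult_mono[OF b1 b2]) (use d0 in auto)
    then show ?thesis by (simp add: norm_mult power2_eq_square[of "1 - r^2"])
  qed
  have num: "norm ((1 + q^(2*n+1)) * (- (q^(2*n))) * q^(2*M+1)) \<le> 2 * r^(2*n) * r^(2*M+1)"
    unfolding norm_mult norm_minus_cancel norm_power r_def[symmetric]
    using a1 r0 by (intro mult_right_mono) auto
  have "norm (R q M n) \<le> (2 * r^(2*n) * r^(2*M+1)) / (1 - r^2)^2"
    unfolding R_def norm_divide
    using num den d0 r0 by (intro frac_le) auto
  also have "\<dots> = (2 / (1 - r^2)^2 * r) * r^(2*n) * r^(2*M)"
    by (simp add: field_simps power_add)
  finally show ?thesis by (simp add: r_def)
qed

lemma beta_nonneg: "0 \<le> c \<Longrightarrow> 0 \<le> r \<Longrightarrow> 0 \<le> beta c r n"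
  by (induction n) auto

lemma summable_beta:
  assumes c: "0 \<le> c" and r: "0 \<le> r" "r < 1"
  shows "summable (beta c r)"
proof -
  have "(\<lambda>n. c * (r^2)^n) \<longlonglongrightarrow> c * 0"
    by (intro tendsto_mult tendsto_const LIMSEQ_power_zero) (use r in \<open>auto simp: power_less_one_iff abs_square_less_1\<close>)
  then have "eventually (\<lambda>n. c * (r^2)^n < 1/2) sequentially"
    by (intro order_tendstoD(2)) auto
  then obtain N where N: "\<And>n. n \<ge> N \<Longrightarrow> c * (r^2)^n < 1/2"
    by (auto simp: eventually_sequentially)
  show ?thesis
  proof (rule summable_ratio_test[of "1/2" N])
    fix n assume "n \<ge> N"
    have "norm (beta c r (Suc n)) = beta c r n * (c * r^(2*n))"
      using beta_nonneg[OF c r(1)] c r by simp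
    also have "\<dots> \<le> beta c r n * (1/2)"
      using N[OF \<open>n \<ge> N\<close>] beta_nonneg[OF c r(1)]
      by (intro mult_left_mono) (auto simp: power_mult)
    finally show "norm (beta c r (Suc n)) \<le> 1/2 * norm (beta c r n)"
      using beta_nonneg[OF c r(1)] by simp
  qed simp
qed

definition KK :: "complex \<Rightarrow> real" where
  "KK q = 2 / (1 - norm q ^ 2)^2 * norm q"

lemma KK_nonneg: "norm q < 1 \<Longrightarrow> 0 \<le> KK q"
  unfolding KK_def by (auto intro!: mult_nonneg_nonneg divide_nonneg_nonneg)

lemma tt_bound:
  assumes q: "norm q < 1"
  shows "norm (tt q M n) \<le> (norm q ^ (2*M))^n * beta (KK q) (norm q) n"
proof (induction n)
  case 0 then show ?case by simp
next
  case (Suc n)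
  have "norm (tt q M (Suc n)) = norm (tt q M n) * norm (R q M n)"
    by (simp add: norm_mult)
  also have "\<dots> \<le> ((norm q ^ (2*M))^n * beta (KK q) (norm q) n)
               * (KK q * norm q ^ (2*n) * norm q ^ (2*M))"
    using normR[OF q, of M n] Suc beta_nonneg[OF KK_nonneg[OF q], of "norm q" n]
    by (intro mult_mono) (auto simp: KK_def)
  also have "\<dots> = (norm q ^ (2*M))^(Suc n) * beta (KK q) (norm q) (Suc n)"
    by (simp add: algebra_simps)
  finally show ?case .
qed

lemma tt_bound2:
  assumes q: "norm q < 1"
  shows "norm (tt q M n) \<le> beta (KK q) (norm q) n"
proof -
  have "(norm q ^ (2*M))^n \<le> 1"
    using q by (intro power_le_one) (auto intro: power_le_one)
  then show ?thesis
    using tt_bound[OF q, of M n] beta_nonneg[OF KK_nonneg[OF q], of "norm q" n]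
    by (meson mult_left_le_one_le norm_ge_zero order_trans zero_le_power)
qed

lemma summable_tt:
  assumes q: "norm q < 1"
  shows "summable (tt q M)"
  by (rule summable_comparison_test[OF _ summable_beta[OF KK_nonneg[OF q]]])
     (use tt_bound2[OF q] q in auto)

lemma tt_shift:
  assumes q: "norm q < 1"
  shows "tt q (Suc M) n * (1 + q^(2*M+2+2*n)) = q^(2*n) * (1 + q^(2*M+2)) * tt q M n"
proof (induction n)
  case 0 then show ?case by simp
next
  case (Suc n)
  define U where "U = q^(2*n)"
  define V where "V = q^(2*M)"
  have x: "2*M+2+2*Suc n = 4+2*M+2*n" "2*Suc M+2+2*n = 4+2*M+2*n" "2*Suc n = 2+2*n"
    "2*Suc M+1 = 3+2*M" "2*n+1 = 1+2*n" "2*n+2 = 2+2*n" "2*M+1 = 1+2*M" "2*M+2 = 2+2*M" "2*M+2+2*n = 2+2*M+2*n"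
    by simp_all
  have e1: "q^(2*M+2+2*n) = q^2*V*U" unfolding x by (simp only: U_def V_def power_add)
  have e2: "q^(2*M+2+2*Suc n) = q^4*V*U" unfolding x(1) by (simp only: U_def V_def power_add)
  have e3: "q^(2*Suc M+2+2*n) = q^4*V*U" unfolding x(2) by (simp only: U_def V_def power_add)
  have e4: "q^(2*n+1) = q*U" "q^(2*n+2) = q^2*U" "q^(2*Suc n) = q^2*U"
    "q^(2*M+1) = q*V" "q^(2*Suc M+1) = q^3*V" "q^(2*M+2) = q^2*V"
    unfolding x by (simp_all only: U_def V_def power_add power_one_right)
  have p1: "q^2*V*U = q^(2+2*M+2*n)" "q^4*V*U = q^(4+2*M+2*n)" "q^2*U = q^(2+2*n)"
    by (simp_all only: U_def V_def power_add)
  have nz1: "1 + q^2*V*U \<noteq> 0" unfolding p1 by (rule nz_pow'(1)[OF q]) simp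
  have nz2: "1 + q^4*V*U \<noteq> 0" unfolding p1 by (rule nz_pow'(1)[OF q]) simp
  have nz3: "1 - q^2*U \<noteq> 0" unfolding p1 by (rule nz_pow'(2)[OF q]) simp
  have IH: "tt q (Suc M) n = U * (1 + q^2*V) * tt q M n / (1 + q^2*V*U)"
  proof -
    have "tt q (Suc M) n * (1 + q^2*V*U) = U * (1 + q^2*V) * tt q M n"
      using Suc.IH unfolding e1 e4(6) U_def[symmetric] .
    then show ?thesis using nz1 by (simp add: field_simps)
  qed
  have R1: "R q (Suc M) n = (1 + q*U) * (-U) * (q^3*V) / ((1 - q^2*U) * (1 + q^4*V*U))"
    unfolding R_def e3 e4 U_def[symmetric] by (rule refl)
  have R0: "R q M n = (1 + q*U) * (-U) * (q*V) / ((1 - q^2*U) * (1 + q^2*V*U))"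
    unfolding R_def e1 e4 U_def[symmetric] by (rule refl)
  have "tt q (Suc M) (Suc n) * (1 + q^(2*M+2+2*Suc n))
      = tt q (Suc M) n * R q (Suc M) n * (1 + q^4*V*U)" by (simp only: tt.simps e2)
  also have "\<dots> = U*(1+q^2*V)*tt q M n/(1+q^2*V*U) * ((1 + q*U) * (-U) * (q^3*V)
        / ((1 - q^2*U) * (1 + q^4*V*U))) * (1 + q^4*V*U)" unfolding IH R1 ..
  also have "\<dots> = q^2*U * (1+q^2*V) * (tt q M n * ((1 + q*U) * (-U) * (q*V)
        / ((1 - q^2*U) * (1 + q^2*V*U))))"
  proof -
    have "U*(1+q^2*V)*tt q M n * ((1 + q*U) * (-U) * (q^3*V))
       = q^2*U * (1+q^2*V) * tt q M n * ((1 + q*U) * (-U) * (q*V))"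
      by (simp add: algebra_simps power2_eq_square power3_eq_cube)
    then show ?thesis unfolding aux_cancel[OF nz2]
      by (simp add: mult.commute mult.left_commute)
  qed
  also have "\<dots> = q^(2*Suc n) * (1 + q^(2*M+2)) * tt q M (Suc n)"
    by (simp only: tt.simps e4 R0)
  finally show ?case .
qed

lemma tele_id:
  assumes q: "norm q < 1"
  shows "(1 + q^(2*M+2)) * tt q M n - (1 - q^(2*M+1)) * tt q (Suc M) n
     = (1 + q^(2*M+2)) * (tt q M n * (1 - q^(2*n)) - tt q M (Suc n) * (1 - q^(2*Suc n)))"
proof -
  define U where "U = q^(2*n)"
  define V where "V = q^(2*M)"
  define T where "T = tt q M n"
  define D where "D = 1 + q^2*V*U"
  have x: "2*Suc n = 2+2*n" "2*n+1 = 1+2*n" "2*n+2 = 2+2*n" "2*M+1 = 1+2*M" "2*M+2 = 2+2*M"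
    "2*M+2+2*n = 2+2*M+2*n"
    by simp_all
  have e1: "q^(2*M+2+2*n) = q^2*V*U" unfolding x(6) by (simp only: U_def V_def power_add)
  have e4: "q^(2*n+1) = q*U" "q^(2*n+2) = q^2*U" "q^(2*Suc n) = q^2*U"
    "q^(2*M+1) = q*V" "q^(2*M+2) = q^2*V"
    unfolding x by (simp_all only: U_def V_def power_add power_one_right)
  have p1: "q^2*V*U = q^(2+2*M+2*n)" "q^2*U = q^(2+2*n)"
    by (simp_all only: U_def V_def power_add)
  have nz1: "D \<noteq> 0" unfolding D_def p1 by (rule nz_pow'(1)[OF q]) simp
  have nz3: "1 - q^2*U \<noteq> 0" unfolding p1 by (rule nz_pow'(2)[OF q]) simp
  have sh: "tt q (Suc M) n = U * (1 + q^2*V) * T / D"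
  proof -
    have "tt q (Suc M) n * D = U * (1 + q^2*V) * T"
      using tt_shift[OF q, of M n] unfolding e1 e4(5) U_def[symmetric] T_def[symmetric] D_def[symmetric] .
    then show ?thesis using nz1 by (simp add: field_simps)
  qed
  have R0: "R q M n = (1 + q*U) * (-U) * (q*V) / ((1 - q^2*U) * D)"
    unfolding R_def e1 e4 U_def[symmetric] D_def by (rule refl)
  have eq: "(1-U)*D + (1+q*U)*U*(q*V) = D - (1 - q*V)*U"
    by (simp add: D_def algebra_simps power2_eq_square)
  have "(1 + q^(2*M+2)) * (tt q M n * (1 - q^(2*n)) - tt q M (Suc n) * (1 - q^(2*Suc n)))
      = (1 + q^2*V) * (T * (1 - U) - T * ((1 + q*U) * (-U) * (q*V) / ((1 - q^2*U) * D)) * (1 - q^2*U))"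
    by (simp only: tt.simps e4 R0 T_def U_def)
  also have "\<dots> = (1 + q^2*V) * T * ((1-U)*D + (1+q*U)*U*(q*V)) / D"
    using nz1 nz3 by (simp add: field_simps)
  also have "\<dots> = (1 + q^2*V) * T * (D - (1 - q*V)*U) / D" unfolding eq ..
  also have "\<dots> = (1 + q^2*V) * T - (1 - q*V) * (U * (1 + q^2*V) * T / D)"
    using nz1 by (simp add: field_simps)
  also have "\<dots> = (1 + q^(2*M+2)) * tt q M n - (1 - q^(2*M+1)) * tt q (Suc M) n"
    unfolding sh e4 T_def ..
  finally show ?thesis ..
qed

definition G :: "complex \<Rightarrow> nat \<Rightarrow> complex" where
  "G q M = suminf (tt q M)"

lemma pow2_lim:
  fixes q :: complex
  assumes q: "norm q < 1"
  shows "(\<lambda>n. q^(2*n)) \<longlonglongrightarrow> 0"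
proof -
  have "norm (q^2) < 1" using q by (simp add: norm_power power_less_one_iff)
  then have "(\<lambda>n. (q^2)^n) \<longlonglongrightarrow> 0" by (rule LIMSEQ_power_zero)
  then show ?thesis by (simp add: power_mult)
qed

lemma G_rec:
  assumes q: "norm q < 1"
  shows "(1 + q^(2*M+2)) * G q M = (1 - q^(2*M+1)) * G q (Suc M)"
proof -
  define e where "e n = tt q M n * (1 - q^(2*n))" for n
  have "e \<longlonglongrightarrow> 0 * (1 - 0)"
    unfolding e_def
    by (intro tendsto_mult tendsto_diff tendsto_const summable_LIMSEQ_zero summable_tt q pow2_lim)
  then have "(\<lambda>n. e n - e (Suc n)) sums (e 0 - 0)" by (intro telescope_sums') simp
  then have "(\<lambda>n. e n - e (Suc n)) sums 0" by (simp add: e_def)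
  then have "(\<lambda>n. (1 + q^(2*M+2)) * (e n - e (Suc n))) sums ((1 + q^(2*M+2)) * 0)"
    by (rule sums_mult)
  then have s1: "(\<lambda>n. (1 + q^(2*M+2)) * tt q M n - (1 - q^(2*M+1)) * tt q (Suc M) n) sums 0"
    unfolding tele_id[OF q] e_def mult_zero_right .
  have s2: "(\<lambda>n. (1 + q^(2*M+2)) * tt q M n - (1 - q^(2*M+1)) * tt q (Suc M) n) sums
      ((1 + q^(2*M+2)) * G q M - (1 - q^(2*M+1)) * G q (Suc M))"
    unfolding G_def
    by (intro sums_diff sums_mult summable_sums summable_tt q)
  from sums_unique2[OF s1 s2] show ?thesis by simp
qed

lemma G_lim:
  assumes q: "norm q < 1"
  shows "G q \<longlonglongrightarrow> 1"
proof -
  define r where "r = norm q"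
  define b where "b n = beta (KK q) r (Suc n)" for n
  have r0: "0 \<le> r" and r1: "r < 1" using q by (auto simp: r_def)
  have sb: "summable b" unfolding b_def
    using summable_beta[OF KK_nonneg[OF q] r0 r1] by (subst summable_Suc_iff)
  have b0: "0 \<le> b n" for n unfolding b_def using beta_nonneg[OF KK_nonneg[OF q] r0] .
  have bnd: "norm (tt q M (Suc n)) \<le> r^(2*M) * b n" for M n
  proof -
    have "(r^(2*M))^(Suc n) \<le> r^(2*M)"
    proof -
      have rm: "r^(2*M) \<le> 1" using r0 r1 by (intro power_le_one) auto
      have "(r^(2*M))^n \<le> 1" by (rule power_le_one[OF _ rm]) (simp add: r0)
      then show ?thesis unfolding power_Suc by (rule mult_left_le) (simp add: r0)
    qed
    show ?thesis
    proof -
      have "norm (tt q M (Suc n)) \<le> (r^(2*M))^(Suc n) * b n"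
        using tt_bound[OF q, of M "Suc n"] unfolding b_def r_def .
      also have "\<dots> \<le> r^(2*M) * b n" by (rule mult_right_mono[OF _ b0]) fact
      finally show ?thesis .
    qed
  qed
  have key: "norm (G q M - 1) \<le> r^(2*M) * suminf b" for M
  proof -
    have sn: "summable (\<lambda>n. norm (tt q M (Suc n)))"
    proof (rule summable_comparison_test'[OF summable_mult[OF sb, of "r^(2*M)"]])
      fix n show "norm (norm (tt q M (Suc n))) \<le> r^(2*M) * b n" using bnd[of M n] by simp
    qed
    have "G q M - 1 = (\<Sum>n. tt q M (Suc n))"
      using suminf_split_head[OF summable_tt[OF q, of M]] by (simp add: G_def)
    then have "norm (G q M - 1) \<le> (\<Sum>n. norm (tt q M (Suc n)))"
      using summable_norm[OF sn] by simp
    also have "\<dots> \<le> (\<Sum>n. r^(2*M) * b n)"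
      by (intro suminf_le sn summable_mult sb bnd)
    also have "\<dots> = r^(2*M) * suminf b" by (rule suminf_mult[OF sb])
    finally show ?thesis .
  qed
  have "(\<lambda>M. r^(2*M) * suminf b) \<longlonglongrightarrow> 0 * suminf b"
  proof (intro tendsto_mult tendsto_const)
    have "(\<lambda>M. (r^2)^M) \<longlonglongrightarrow> 0" using r0 r1
      by (intro LIMSEQ_power_zero) (simp add: power_less_one_iff abs_square_less_1)
    then show "(\<lambda>M. r^(2*M)) \<longlonglongrightarrow> 0" by (simp add: power_mult)
  qed
  note L = this
  have "(\<lambda>M. G q M - 1) \<longlonglongrightarrow> 0"
  proof (rule Lim_null_comparison[OF always_eventually])
    show "\<forall>M. norm (G q M - 1) \<le> r^(2*M) * suminf b" using key by blast
  qed (use L in simp)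
  then have "(\<lambda>M. G q M - 1 + 1) \<longlonglongrightarrow> 0 + 1" by (intro tendsto_add tendsto_const)
  then show ?thesis by simp
qed

lemma G_prod:
  assumes q: "norm q < 1"
  shows "G q 0 * (\<Prod>m<M. 1 + q^(2*m+2)) = (\<Prod>m<M. 1 - q^(2*m+1)) * G q M"
proof (induction M)
  case 0 then show ?case by simp
next
  case (Suc M)
  have "G q 0 * (\<Prod>m<Suc M. 1 + q^(2*m+2)) = (G q 0 * (\<Prod>m<M. 1 + q^(2*m+2))) * (1 + q^(2*M+2))"
    by (simp add: mult.assoc)
  also have "\<dots> = (\<Prod>m<M. 1 - q^(2*m+1)) * ((1 + q^(2*M+2)) * G q M)"
    unfolding Suc.IH by (simp add: ac_simps)
  also have "\<dots> = (\<Prod>m<M. 1 - q^(2*m+1)) * ((1 - q^(2*M+1)) * G q (Suc M))"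
    unfolding G_rec[OF q] ..
  also have "\<dots> = (\<Prod>m<Suc M. 1 - q^(2*m+1)) * G q (Suc M)"
    by (simp add: mult.assoc)
  finally show ?case .
qed

lemma qpoch_q_even:
  "qpoch q q (2*M) = (\<Prod>m<M. (1 - q^(2*m+1)) * (1 - q^(2*m+2)))"
proof (induction M)
  case 0 then show ?case by (simp add: qpoch_def)
next
  case (Suc M)
  have "qpoch q q (2*Suc M) = qpoch q q (2*M) * (1 - q*q^(2*M)) * (1 - q*q^(Suc (2*M)))"
    by (simp add: qpoch_def)
  then show ?case using Suc.IH by (simp add: mult.assoc)
qed

lemma qpoch_q4:
  "qpoch (q^4) (q^4) M = (\<Prod>m<M. (1 + q^(2*m+2)) * (1 - q^(2*m+2)))"
  unfolding qpoch_def
proof (rule prod.cong[OF refl])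
  fix m
  have h1: "(q^(2*m+2))^2 = q^((2*m+2)*2)" by (simp only: power_mult)
  have h2: "(2*m+2)*2 = 4+4*m" by simp
  have h3: "q^(4+4*m) = q^4*(q^4)^m" by (simp only: power_add power_mult)
  have "(q^(2*m+2))^2 = q^4 * (q^4)^m" unfolding h1 h2 h3 ..
  then show "1 - q^4 * (q^4)^m = (1 + q^(2*m+2)) * (1 - q^(2*m+2))"
    by (simp add: algebra_simps power2_eq_square)
qed

lemma G0_eq:
  assumes q: "norm q < 1"
  shows "G q 0 * qpoch (q^4) (q^4) M = qpoch q q (2*M) * G q M"
proof -
  have "G q 0 * qpoch (q^4) (q^4) M = (G q 0 * (\<Prod>m<M. 1 + q^(2*m+2))) * (\<Prod>m<M. 1 - q^(2*m+2))"
    unfolding qpoch_q4 prod.distrib by (simp add: mult.assoc)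
  also have "\<dots> = qpoch q q (2*M) * G q M"
    unfolding G_prod[OF q] qpoch_q_even prod.distrib by (simp add: ac_simps)
  finally show ?thesis .
qed

lemma qpoch_lim:
  fixes a p :: complex
  assumes p: "norm p < 1"
  shows "convergent_prod (\<lambda>k. 1 - a * p^k)" "(\<lambda>n. qpoch a p n) \<longlonglongrightarrow> qpochinf a p"
proof -
  have "summable (\<lambda>k. norm a * norm p ^ k)"
    using p by (intro summable_mult summable_geometric) simp
  then have "summable (\<lambda>k. norm ((1 - a * p^k) - 1))"
    by (simp add: norm_mult norm_power)
  then have "abs_convergent_prod (\<lambda>k. 1 - a * p^k)"
    by (simp add: abs_convergent_prod_conv_summable)
  then show cp: "convergent_prod (\<lambda>k. 1 - a * p^k)"
    by (rule abs_convergent_prod_imp_convergent_prod)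
  have "(\<lambda>n. \<Prod>k\<le>n. 1 - a * p^k) \<longlonglongrightarrow> qpochinf a p"
    unfolding qpochinf_def by (rule convergent_prod_LIMSEQ[OF cp])
  then have "(\<lambda>n. qpoch a p (Suc n)) \<longlonglongrightarrow> qpochinf a p"
    by (simp add: qpoch_def lessThan_Suc_atMost)
  then show "(\<lambda>n. qpoch a p n) \<longlonglongrightarrow> qpochinf a p"
    by (rule filterlim_sequentially_Suc[THEN iffD1])
qed

lemma Q4_nz:
  assumes q: "norm q < 1"
  shows "qpoch (q^4) (q^4) k \<noteq> 0"
proof -
  have "1 - q^4 * (q^4)^j \<noteq> 0" for j
  proof -
    have "q^4 * (q^4)^j = q^(4+4*j)" by (simp only: power_add power_mult)
    then show ?thesis using nz_pow'(2)[OF q, of "4+4*j"] by simp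
  qed
  then show ?thesis unfolding qpoch_def by (simp add: prod_zero_iff)
qed

lemma G0_val:
  assumes q: "norm q < 1"
  shows "G q 0 = qpochinf q q / qpochinf (q^4) (q^4)"
proof -
  have q4: "norm (q^4) < 1" using q by (simp add: norm_power power_less_one_iff)
  have l1: "(\<lambda>M. G q 0 * qpoch (q^4) (q^4) M) \<longlonglongrightarrow> G q 0 * qpochinf (q^4) (q^4)"
    by (intro tendsto_mult tendsto_const qpoch_lim(2)[OF q4])
  have sm: "strict_mono (\<lambda>M::nat. 2*M)" by (simp add: strict_mono_def)
  have "((qpoch q q) \<circ> (\<lambda>M. 2*M)) \<longlonglongrightarrow> qpochinf q q"
    by (rule LIMSEQ_subseq_LIMSEQ[OF qpoch_lim(2)[OF q] sm])
  then have "(\<lambda>M. qpoch q q (2*M) * G q M) \<longlonglongrightarrow> qpochinf q q * 1"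
    by (intro tendsto_mult G_lim q) (simp add: comp_def)
  then have l2: "(\<lambda>M. G q 0 * qpoch (q^4) (q^4) M) \<longlonglongrightarrow> qpochinf q q"
    by (simp add: G0_eq[OF q])
  have eq: "G q 0 * qpochinf (q^4) (q^4) = qpochinf q q" by (rule LIMSEQ_unique[OF l1 l2])
  have "qpochinf (q^4) (q^4) \<noteq> 0"
  proof -
    have "1 - q^4 * (q^4)^j \<noteq> 0" for j
    proof -
      have "q^4 * (q^4)^j = q^(4+4*j)" by (simp only: power_add power_mult)
      then show ?thesis using nz_pow'(2)[OF q, of "4+4*j"] by simp
    qed
    then show ?thesis unfolding qpochinf_def
      by (intro prodinf_nonzero qpoch_lim(1)[OF q4])
  qed
  with eq show ?thesis by (simp add: field_simps)
qed

definition bb :: "complex \<Rightarrow> nat \<Rightarrow> complex" where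
  "bb q k = (-1)^k * q^(k^2) * qpoch (-q) (q^2) k / qpoch (q^4) (q^4) k"

lemma bb_tt:
  assumes q: "norm q < 1"
  shows "bb q k = tt q 0 k"
proof (induction k)
  case 0 then show ?case by (simp add: bb_def qpoch_def)
next
  case (Suc k)
  define U where "U = q^(2*k)"
  define Qa where "Qa = qpoch (-q) (q^2) k"
  define Q4 where "Q4 = qpoch (q^4) (q^4) k"
  have Q4nz: "Q4 \<noteq> 0" unfolding Q4_def by (rule Q4_nz[OF q])
  have p1: "q^2*U = q^(2+2*k)" by (simp only: U_def power_add)
  have nz1: "1 - q^2*U \<noteq> 0" "1 + q^2*U \<noteq> 0"
    unfolding p1 by (rule nz_pow'[OF q]; simp)+
  have x1: "q^((Suc k)^2) = q^(k^2) * q * U"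
  proof -
    have "(Suc k)^2 = k^2 + 1 + 2*k" by (simp add: power2_eq_square)
    then show ?thesis by (simp only: U_def power_add power_one_right)
  qed
  have x2: "(q^2)^k = U" by (simp add: U_def power_mult)
  have x3: "1 - q^4 * (q^4)^k = (1 - q^2*U) * (1 + q^2*U)" 
  proof -
    have "q^4 * (q^4)^k = q^(4+4*k)" by (simp only: power_add power_mult)
    also have "\<dots> = q^((2+2*k)*2)" by (rule arg_cong[where f="\<lambda>e. q^e"]) simp
    also have "\<dots> = (q^2*U)^2" unfolding p1 by (simp only: power_mult)
    finally show ?thesis by (simp add: algebra_simps power2_eq_square)
  qed
  have bS: "bb q (Suc k) = (-1)^k * q^(k^2) * Qa / Q4 * ((-1) * q * U * (1 + q*U) / ((1 - q^2*U) * (1 + q^2*U)))"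
  proof -
    have "bb q (Suc k) = (-1)^(Suc k) * q^((Suc k)^2) * (Qa * (1 - (-q)*(q^2)^k)) / (Q4 * (1 - q^4*(q^4)^k))"
      unfolding bb_def Qa_def Q4_def qpoch_def by simp
    also have "\<dots> = (-1)^(Suc k) * (q^(k^2) * q * U) * (Qa * (1 + q*U)) / (Q4 * ((1 - q^2*U) * (1 + q^2*U)))"
      unfolding x1 x2 x3 by simp
    finally show ?thesis using Q4nz nz1 by (simp add: field_simps)
  qed
  have R0: "R q 0 k = (1 + q*U) * (-U) * q / ((1 - q^2*U) * (1 + q^2*U))"
  proof -
    have a: "2*k+1 = 1+2*k" "2*k+2 = 2+2*k" "2*0+1 = (1::nat)" "2*0+2+2*k = 2+2*k" by simp_all
    show ?thesis unfolding R_def a by (simp only: power_add U_def power_one_right)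
  qed
  show ?case
    unfolding tt.simps Suc.IH[symmetric] bS R0
    by (simp add: bb_def Qa_def Q4_def field_simps)
qed

lemma term_eq:
  assumes q: "norm q < 1"
  shows "(let n = Suc m in
            q ^ ((2*n - 1)^2) * qpoch (-q) (q^2) (2*n - 1)
              * (-1 + q ^ (4*n - 1) + q ^ (8*n) + q ^ (8*n - 2))
              / qpoch (q^4) (q^4) (2*n)) = bb q (2*m+1) + bb q (2*m+2)"
proof -
  define k where "k = 2*m+1"
  define X where "X = q^(k^2)"
  define Y where "Y = q^(4*m+3)"
  define Qa where "Qa = qpoch (-q) (q^2) k"
  define Q4 where "Q4 = qpoch (q^4) (q^4) k"
  have ex: "2*Suc m - 1 = k" "4*Suc m - 1 = 4*m+3" "8*Suc m = 8*m+8" "8*Suc m - 2 = 8*m+6"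
    "2*Suc m = Suc k" "2*m+2 = Suc k" "Suc k - 1 = k" "8*m+8-2 = 8*m+6" by (simp_all add: k_def)
  have Q4nz: "Q4 \<noteq> 0" unfolding Q4_def by (rule Q4_nz[OF q])
  have y1: "q^((Suc k)^2) = X * Y"
  proof -
    have "(Suc k)^2 = k^2 + (4*m+3)" by (simp add: k_def power2_eq_square)
    then show ?thesis by (simp only: X_def Y_def power_add)
  qed
  have y2: "q * (q^2)^k = Y"
  proof -
    have "q * (q^2)^k = q^(1 + 2*k)" by (simp only: power_add power_mult power_one_right)
    also have "\<dots> = Y" unfolding Y_def by (rule arg_cong[where f="\<lambda>e. q^e"]) (simp add: k_def)
    finally show ?thesis .
  qed
  have y3: "q^(8*m+6) = Y^2" unfolding Y_def power_mult[symmetric]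
    by (rule arg_cong[where f="\<lambda>e. q^e"]) simp
  have y4: "q^(8*m+8) = q^2*Y^2" unfolding Y_def power_mult[symmetric] power_add[symmetric]
    by (rule arg_cong[where f="\<lambda>e. q^e"]) simp
  have y5: "q^4 * (q^4)^k = q^2*Y^2"
  proof -
    have "q^4 * (q^4)^k = q^(8*m+8)" unfolding power_mult[symmetric] power_add[symmetric]
      by (rule arg_cong[where f="\<lambda>e. q^e"]) (simp add: k_def)
    then show ?thesis using y4 by simp
  qed
  have nzY: "1 - q^2*Y^2 \<noteq> 0" unfolding y4[symmetric] by (rule nz_pow'(2)[OF q]) simp
  have odd: "(-1::complex)^k = -1" by (simp add: k_def)
  have b1: "bb q (2*m+1) = - X * Qa / Q4" unfolding bb_def k_def[symmetric] X_def Qa_def Q4_def odd by simp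
  have b2: "bb q (2*m+2) = X * Y * (Qa * (1 + Y)) / (Q4 * (1 - q^2*Y^2))"
  proof -
    have "bb q (2*m+2) = (-1)^(Suc k) * q^((Suc k)^2) * (Qa * (1 - (-q)*(q^2)^k)) / (Q4 * (1 - q^4*(q^4)^k))"
      unfolding bb_def Qa_def Q4_def qpoch_def ex(6) by simp
    also have "\<dots> = X * Y * (Qa * (1 + Y)) / (Q4 * (1 - q^2*Y^2))"
      using odd unfolding y1 y5 by (simp add: mult.assoc flip: y2)
    finally show ?thesis .
  qed
  have "(let n = Suc m in
            q ^ ((2*n - 1)^2) * qpoch (-q) (q^2) (2*n - 1)
              * (-1 + q ^ (4*n - 1) + q ^ (8*n) + q ^ (8*n - 2))
              / qpoch (q^4) (q^4) (2*n))
     = X * Qa * (-1 + Y + q^2*Y^2 + Y^2) / (Q4 * (1 - q^4*(q^4)^k))"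
    unfolding Let_def ex X_def[symmetric] Qa_def[symmetric] Y_def[symmetric] y3 y4
    by (simp add: qpoch_def Q4_def)
  also have "\<dots> = bb q (2*m+1) + bb q (2*m+2)"
    unfolding b1 b2 y5 using Q4nz nzY by (simp add: field_simps) (simp add: algebra_simps eval_nat_numeral)
  finally show ?thesis .
qed

theorem mainTheorem8:
  fixes q :: complex
  assumes "norm q < 1"
  shows "summable (\<lambda>m. let n = Suc m in
            q ^ ((2*n - 1)^2) * qpoch (-q) (q^2) (2*n - 1)
              * (-1 + q ^ (4*n - 1) + q ^ (8*n) + q ^ (8*n - 2))
              / qpoch (q^4) (q^4) (2*n))
       \<and> 1 + (\<Sum>m. let n = Suc m in
            q ^ ((2*n - 1)^2) * qpoch (-q) (q^2) (2*n - 1)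
              * (-1 + q ^ (4*n - 1) + q ^ (8*n) + q ^ (8*n - 2))
              / qpoch (q^4) (q^4) (2*n))
         = qpochinf q q / qpochinf (q^4) (q^4)"
proof -
  note q = assms
  have s0: "bb q sums G q 0"
  proof -
    have "bb q = tt q 0" using bb_tt[OF q] by (simp add: fun_eq_iff)
    then show ?thesis unfolding G_def using summable_sums[OF summable_tt[OF q, of 0]] by simp
  qed
  have b0: "bb q 0 = 1" by (simp add: bb_def qpoch_def)
  have s1: "(\<lambda>k. bb q (Suc k)) sums (G q 0 - 1)"
    using s0 b0 by (simp add: sums_Suc_iff)
  have s2: "(\<lambda>m. sum (\<lambda>k. bb q (Suc k)) {m*2..<m*2+2}) sums (G q 0 - 1)"
    by (rule sums_group[OF s1]) simp
  have eqs: "sum (\<lambda>k. bb q (Suc k)) {m*2..<m*2+2} = bb q (2*m+1) + bb q (2*m+2)" for m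
  proof -
    have "{m*2..<m*2+2} = {m*2, m*2+1}" by auto
    then show ?thesis by (simp add: algebra_simps)
  qed
  have s3: "(\<lambda>m. let n = Suc m in
            q ^ ((2*n - 1)^2) * qpoch (-q) (q^2) (2*n - 1)
              * (-1 + q ^ (4*n - 1) + q ^ (8*n) + q ^ (8*n - 2))
              / qpoch (q^4) (q^4) (2*n)) sums (G q 0 - 1)"
    using s2 unfolding eqs term_eq[OF q, symmetric] .
  show ?thesis
    using sums_summable[OF s3] sums_unique[OF s3, symmetric] G0_val[OF q]
    by (metis add.commute diff_add_cancel)
qed

end
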